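(* Let $\mu,\mu_2$ be the first and second moments of some probability distribution on $[0,1]$, and set $\sigma^2=\mu_2-\mu^2$. Let $\mathcal{D}$ be the set of probability distributions on $[0,1]$ with $E(X)=\mu$ and $E(X^2)=\mu_2$. For a distribution $F$ write $F(x)=P(X\le x)$ and $F_{-}(x)=P(X<x)$ for $X\sim F$. Fix $x\in(0,1)$ and define $\mu_2^*$ as follows: - if $x\le\mu$, let $F_1$ be the distribution on $\{x,1\}$ with $P(X=x)=(1-\mu)/(1-x)$ and $P(X=1)=1-(1-\mu)/(1-x)$; $\mu_2^*$ is its second moment, with variance $\sigma_*^2=(1-\mu)(\mu-x)$; - if $x>\mu$, let $F_2$ be the distribution on $\{0,x\}$ with $P(X=x)=\mu/x$ and $P(X=0)=1-\mu/x$; $\mu_2^*$ is its second moment, with variance $\sigma_*^2=x(x-\mu)$. Suppose $\mu_2\ge\mu_2^*$. Let $F_4$ be the distribution supported on $\{0,x,1\}$ satisfying both moment constraints. Its masses are $$P(X=x)=p_4=\frac{\mu-\mu_2}{x-x^2},\qquad P(X=1)=\mu-xp_4,\qquad P(X=0)=1-p_4-P(X=1).$$ Then for every $G\in\mathcal{D}$ we have $G(x)\le F_4(x)$ and $G_{-}(x)\ge F_{4-}(x)$. That is, $F_4$ maximizes $F(x)$ and minimizes $F_{-}(x)$ subject to the moment constraints.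
   Context: This setting models a single histogram bucket rescaled to $[0,1]$, for which the mean $\mu$ and the second moment $\mu_2$ of the observations in the bucket are known. *)

theory Defs
  imports "HOL-Probability.Probability"
begin

definition moment_class :: "real \<Rightarrow> real \<Rightarrow> real measure set" where
  "moment_class mu mu2 = {M. prob_space M \<and> sets M = sets borel \<and>
      (AE t in M. t \<in> {0..1}) \<and>
      integrable M (\<lambda>t. t) \<and> (\<integral>t. t \<partial>M) = mu \<and>
      integrable M (\<lambda>t. t^2) \<and> (\<integral>t. t^2 \<partial>M) = mu2}"

definition F1_mass_x :: "real \<Rightarrow> real \<Rightarrow> real" where
  "F1_mass_x mu x = (1 - mu) / (1 - x)"
definition F1_mass_1 :: "real \<Rightarrow> real \<Rightarrow> real" where
  "F1_mass_1 mu x = 1 - (1 - mu) / (1 - x)"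
definition F2_mass_x :: "real \<Rightarrow> real \<Rightarrow> real" where
  "F2_mass_x mu x = mu / x"
definition F2_mass_0 :: "real \<Rightarrow> real \<Rightarrow> real" where
  "F2_mass_0 mu x = 1 - mu / x"

definition mu2_star :: "real \<Rightarrow> real \<Rightarrow> real" where
  "mu2_star mu x = (if x \<le> mu
      then F1_mass_x mu x * x^2 + F1_mass_1 mu x * 1^2
      else F2_mass_0 mu x * 0^2 + F2_mass_x mu x * x^2)"

definition p4 :: "real \<Rightarrow> real \<Rightarrow> real \<Rightarrow> real" where
  "p4 mu mu2 x = (mu - mu2) / (x - x^2)"
definition F4_mass_1 :: "real \<Rightarrow> real \<Rightarrow> real \<Rightarrow> real" where
  "F4_mass_1 mu mu2 x = mu - x * p4 mu mu2 x"
definition F4_mass_0 :: "real \<Rightarrow> real \<Rightarrow> real \<Rightarrow> real" where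
  "F4_mass_0 mu mu2 x = 1 - p4 mu mu2 x - F4_mass_1 mu mu2 x"

definition F4_cdf :: "real \<Rightarrow> real \<Rightarrow> real \<Rightarrow> real \<Rightarrow> real" where
  "F4_cdf mu mu2 x t =
     (if 0 \<le> t then F4_mass_0 mu mu2 x else 0) +
     (if x \<le> t then p4 mu mu2 x else 0) +
     (if 1 \<le> t then F4_mass_1 mu mu2 x else 0)"
definition F4_cdf_left :: "real \<Rightarrow> real \<Rightarrow> real \<Rightarrow> real \<Rightarrow> real" where
  "F4_cdf_left mu mu2 x t =
     (if 0 < t then F4_mass_0 mu mu2 x else 0) +
     (if x < t then p4 mu mu2 x else 0) +
     (if 1 < t then F4_mass_1 mu mu2 x else 0)"

end

theory Submission
  imports Defs
begin

theorem mainTheorem3: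
  fixes mu mu2 x :: real
  assumes "moment_class mu mu2 \<noteq> {}"
    and "0 < x" and "x < 1"
    and "mu2 \<ge> mu2_star mu x"
  shows "\<forall>G \<in> moment_class mu mu2.
           measure G {..x} \<le> F4_cdf mu mu2 x x \<and>
           measure G {..<x} \<ge> F4_cdf_left mu mu2 x x"
proof
  fix G assume "G \<in> moment_class mu mu2"
  then have P: "prob_space G" and S: "sets G = sets borel" and AE: "AE t in G. t \<in> {0..1}"
    and i1: "integrable G (\<lambda>t. t)" and e1: "(\<integral>t. t \<partial>G) = mu"
    and i2: "integrable G (\<lambda>t. t^2)" and e2: "(\<integral>t. t^2 \<partial>G) = mu2"
    unfolding moment_class_def by auto
  interpret prob_space G by (rule P)
  have x0: "x - x^2 = x * (1 - x)" by (simp add: power2_eq_square algebra_simps)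
  have xp: "x * p4 mu mu2 x = (mu - mu2) / (1 - x)"
    using assms(2,3) unfolding p4_def x0 by simp
  have one: "(\<integral>t. (1::real) \<partial>G) = 1" by (simp add: prob_space)
  have ic: "integrable G (\<lambda>t. (1::real))" by simp
  have mA: "{..x} \<in> sets G" "{..<x} \<in> sets G" using S by auto
  have IA: "measure G {..x} = (\<integral>t. indicator {..x} t \<partial>G)"
    using mA by simp
  have IB: "measure G {..<x} = (\<integral>t. indicator {..<x} t \<partial>G)"
    using mA by simp
  have f: "(\<integral>t. 1 - (t^2 - x * t) / (1 - x) \<partial>G) = 1 - (mu2 - x*mu)/(1-x)"
    using i1 i2 e1 e2 one by (simp add: Bochner_Integration.integral_diff integral_divide)
  have g: "(\<integral>t. 1 - ((1+x) * t - t^2) / x \<partial>G) = 1 - ((1+x)*mu - mu2)/x"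
    using i1 i2 e1 e2 one by (simp add: Bochner_Integration.integral_diff integral_divide)
  have A: "measure G {..x} \<le> 1 - (mu2 - x*mu)/(1-x)"
  proof -
    have "(\<integral>t. indicator {..x} t \<partial>G) \<le> (\<integral>t. 1 - (t^2 - x * t) / (1 - x) \<partial>G)"
    proof (rule integral_mono_AE)
      show "integrable G (indicator {..x} :: real \<Rightarrow> real)" using mA by (intro integrable_real_indicator) (auto simp: less_top[symmetric])
      show "integrable G (\<lambda>t. 1 - (t^2 - x * t) / (1 - x))" using i1 i2 by auto
      show "AE t in G. indicator {..x} t \<le> 1 - (t^2 - x * t) / (1 - x)"
        using AE
      proof (rule AE_mp, intro AE_I2 impI)
        fix t :: real assume t: "t \<in> {0..1}"
        show "indicator {..x} t \<le> 1 - (t^2 - x * t) / (1 - x)"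
        proof (cases "t \<le> x")
          case True
          have "t * (t - x) \<le> 0" using t True by (simp add: mult_nonneg_nonpos)
          then have "(t^2 - x*t)/(1-x) \<le> 0" using assms(3)
            by (simp add: divide_nonpos_pos power2_eq_square algebra_simps)
          then show ?thesis using True by simp
        next
          case False
          have "t * (t - x) \<le> 1 * (1 - x)" using t False
            by (intro mult_mono) auto
          then have "(t^2 - x*t)/(1-x) \<le> 1" using assms(3)
            by (simp add: divide_le_eq power2_eq_square algebra_simps)
          then show ?thesis using False by simp
        qed
      qed
    qed
    then show ?thesis using IA f by simp
  qed
  have B: "measure G {..<x} \<ge> 1 - ((1+x)*mu - mu2)/x"
  proof -
    have "(\<integral>t. indicator {..<x} t \<partial>G) \<ge> (\<integral>t. 1 - ((1+x) * t - t^2) / x \<partial>G)"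
    proof (rule integral_mono_AE)
      show "integrable G (indicator {..<x} :: real \<Rightarrow> real)" using mA by (intro integrable_real_indicator) (auto simp: less_top[symmetric])
      show "integrable G (\<lambda>t. 1 - ((1+x) * t - t^2) / x)" using i1 i2 by auto
      show "AE t in G. 1 - ((1+x) * t - t^2) / x \<le> indicator {..<x} t"
        using AE
      proof (rule AE_mp, intro AE_I2 impI)
        fix t :: real assume t: "t \<in> {0..1}"
        show "1 - ((1+x) * t - t^2) / x \<le> indicator {..<x} t"
        proof (cases "t < x")
          case True
          have "0 \<le> t * (1 + x - t)" using t True by simp
          then have "0 \<le> ((1+x) * t - t^2) / x" using assms(2)
            by (simp add: power2_eq_square algebra_simps)
          then show ?thesis using True by simp
        next
          case False
          have "0 \<le> (t - x) * (1 - t)" using t False by simp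
          then have "x \<le> (1+x) * t - t^2" by (simp add: power2_eq_square algebra_simps)
          then have "1 \<le> ((1+x) * t - t^2) / x" using assms(2)
            by (simp add: le_divide_eq)
          then show ?thesis using False by simp
        qed
      qed
    qed
    then show ?thesis using IB g by simp
  qed
  have c1: "F4_cdf mu mu2 x x = 1 - (mu2 - x*mu)/(1-x)"
  proof -
    have "F4_cdf mu mu2 x x = 1 - mu + x * p4 mu mu2 x"
      using assms(2,3) unfolding F4_cdf_def F4_mass_0_def F4_mass_1_def by simp
    also have "\<dots> = 1 - (mu2 - x*mu)/(1-x)" unfolding xp using assms(3)
      by (simp add: field_simps)
    finally show ?thesis .
  qed
  have c2: "F4_cdf_left mu mu2 x x = 1 - ((1+x)*mu - mu2)/x"
  proof -
    have "F4_cdf_left mu mu2 x x = 1 - mu - (1 - x) * p4 mu mu2 x"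
      using assms(2,3) unfolding F4_cdf_left_def F4_mass_0_def F4_mass_1_def
      by (simp add: algebra_simps)
    also have "(1 - x) * p4 mu mu2 x = (mu - mu2) / x"
      using assms(2,3) unfolding p4_def x0 by simp
    also have "1 - mu - (mu - mu2) / x = 1 - ((1+x)*mu - mu2)/x" using assms(2)
      by (simp add: field_simps)
    finally show ?thesis .
  qed
  show "measure G {..x} \<le> F4_cdf mu mu2 x x \<and> measure G {..<x} \<ge> F4_cdf_left mu mu2 x x"
    using A B c1 c2 by simp
qed

end
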